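(* For every $\varepsilon>0$ and every integer $d\ge1$ there exist $R_0,T_0$ such that for all integers $R\ge R_0$ and $T\ge T_0$ the following holds: for every unit vector $\ket\phi=\sum_{j=1}^d c_j\ket j\in\mathbb C^d$ (with arbitrary complex $c_j$) there exists a permutation $\pi$ of $[T]\times[d]\times[R]$ such that $$\operatorname{Re}\Big[(\bra{\vartheta_T}\otimes\bra{\mu_R})\,P_\pi\,(\ket{\vartheta_T}\otimes\ket\phi\otimes\ket{\mu_R})\Big]\ \ge\ 1-\varepsilon,$$ where $\ket{\vartheta_T}\otimes\ket{\mu_R}$ is regarded as a vector of $\mathbb C^T\otimes\mathbb C^d\otimes\mathbb C^R$ via the embedding $\ket t\otimes\ket r\mapsto\ket t\otimes\ket 1\otimes\ket r$.
   Context: $[d]=\{1,\dots,d\}$ and $\{\ket 1,\dots,\ket d\}$ is the computational basis of $\mathbb C^d$. For an integer $R$, $\ket{\mu_R}=\chi_R^{-1/2}\sum_{r=1}^R r^{-1/2}\ket r\in\mathbb C^R$, where $\chi_R=\sum_{r=1}^R r^{-1}$. For an integer $T$ and $\omega=e^{2\pi i/T}$, $\ket{\vartheta_T}=T^{-1/2}\sum_{t=1}^T\omega^t\ket t\in\mathbb C^T$. For a permutation $\pi$ of a finite index set $X$, $P_\pi$ is the permutation matrix on $\mathbb C^X$ with $P_\pi\ket x=\ket{\pi(x)}$; here $\mathbb C^T\otimes\mathbb C^d\otimes\mathbb C^R$ is identified with $\mathbb C^{[T]\times[d]\times[R]}$ via $\ket t\otimes\ket j\otimes\ket r\leftrightarrow\ket{(t,j,r)}$.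 *)

theory Defs
  imports "HOL-Analysis.Analysis" "HOL-Combinatorics.Permutations"
begin

text \<open>Vectors in C^X are represented as functions X \<Rightarrow> complex; only values on the
index set matter.\<close>

definition chi :: "nat \<Rightarrow> real" where
  "chi R = (\<Sum>r=1..R. 1 / real r)"

definition mu :: "nat \<Rightarrow> nat \<Rightarrow> complex" where
  "mu R r = (if r \<in> {1..R} then complex_of_real (1 / sqrt (chi R) * (1 / sqrt (real r))) else 0)"

definition vartheta :: "nat \<Rightarrow> nat \<Rightarrow> complex" where
  "vartheta T t = (if t \<in> {1..T} then
      complex_of_real (1 / sqrt (real T)) * exp (2 * complex_of_real pi * \<i> / of_nat T) ^ t else 0)"

definition index_set :: "nat \<Rightarrow> nat \<Rightarrow> nat \<Rightarrow> (nat \<times> nat \<times> nat) set" where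
  "index_set T d R = {1..T} \<times> {1..d} \<times> {1..R}"

definition in_state :: "nat \<Rightarrow> nat \<Rightarrow> (nat \<Rightarrow> complex) \<Rightarrow> nat \<times> nat \<times> nat \<Rightarrow> complex" where
  "in_state T R c = (\<lambda>(t, j, r). vartheta T t * c j * mu R r)"

definition out_state :: "nat \<Rightarrow> nat \<Rightarrow> nat \<times> nat \<times> nat \<Rightarrow> complex" where
  "out_state T R = (\<lambda>(t, j, r). vartheta T t * (if j = 1 then 1 else 0) * mu R r)"

text \<open>Inner product <w| P_pi |v> where P_pi |x> = |pi x>:
  P_pi v = sum_x v x |pi x>, so <w|P_pi v> = sum_x conj (w (pi x)) * v x.\<close>
definition perm_amp :: "(nat \<times> nat \<times> nat) set \<Rightarrow> (nat \<times> nat \<times> nat \<Rightarrow> nat \<times> nat \<times> nat)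
    \<Rightarrow> (nat \<times> nat \<times> nat \<Rightarrow> complex) \<Rightarrow> (nat \<times> nat \<times> nat \<Rightarrow> complex) \<Rightarrow> complex" where
  "perm_amp X \<pi> w v = (\<Sum>x\<in>X. cnj (w (\<pi> x)) * v x)"

end

theory Submission
  imports Defs "HOL-Real_Asymp.Real_Asymp"
begin

lemma ev_T: "e > 0 \<Longrightarrow> \<exists>T0. \<forall>T\<ge>T0. cos (pi / real T) \<ge> 1 - e"
proof -
  assume e: "e > 0"
  have "((\<lambda>T::nat. cos (pi / real T)) \<longlongrightarrow> 1) sequentially" by real_asymp
  then have "eventually (\<lambda>T. cos (pi / real T) > 1 - e) sequentially"
    using e by (intro order_tendstoD) auto
  then show ?thesis unfolding eventually_sequentially by (meson less_imp_le)
qed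

lemma ev_R: "e > 0 \<Longrightarrow> \<exists>R0. \<forall>R\<ge>R0. (ln (real R) - real d)/(1 + ln (real R)) \<ge> 1 - e \<and> ln (real R) \<ge> real d"
proof -
  assume e: "e > 0"
  have "((\<lambda>R::nat. (ln (real R) - real d)/(1 + ln (real R))) \<longlongrightarrow> 1) sequentially" by real_asymp
  then have 1: "eventually (\<lambda>R. (ln (real R) - real d)/(1 + ln (real R)) > 1 - e) sequentially"
    using e by (intro order_tendstoD) auto
  have 2: "eventually (\<lambda>R::nat. ln (real R) \<ge> real d) sequentially" by real_asymp
  from eventually_conj[OF 1 2] show ?thesis unfolding eventually_sequentially by (meson less_imp_le)
qed



definition DD :: "(nat \<Rightarrow> real) \<Rightarrow> nat \<Rightarrow> nat \<Rightarrow> (nat \<times> nat) set" where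
  "DD a d R = {p \<in> {1..d}\<times>{1..R}. a (fst p) > 0}"
definition kk :: "(nat \<Rightarrow> real) \<Rightarrow> nat \<times> nat \<Rightarrow> real" where
  "kk a p = real (snd p) / a (fst p)"
definition LL :: "(nat \<Rightarrow> real) \<Rightarrow> nat \<Rightarrow> nat \<Rightarrow> nat \<times> nat \<Rightarrow> (nat \<times> nat) set" where
  "LL a d R p = {q \<in> DD a d R. kk a q < kk a p \<or> (kk a q = kk a p \<and> fst q \<le> fst p)}"
definition gg where "gg a d R p = card (LL a d R p)"

lemma DD_fin: "finite (DD a d R)" unfolding DD_def by auto
lemma LL_fin: "finite (LL a d R p)" unfolding LL_def using DD_fin by auto

lemma kk_inj: "p \<in> DD a d R \<Longrightarrow> q \<in> DD a d R \<Longrightarrow> kk a p = kk a q \<Longrightarrow> fst p = fst q \<Longrightarrow> p = q"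
  unfolding DD_def kk_def by (cases p; cases q) (auto simp: field_simps)

lemma LL_sub: "p \<in> DD a d R \<Longrightarrow> q \<in> DD a d R \<Longrightarrow> q \<in> LL a d R p \<Longrightarrow> p \<noteq> q \<Longrightarrow> LL a d R q \<subset> LL a d R p"
proof -
  assume p: "p \<in> DD a d R" and q: "q \<in> DD a d R" and qL: "q \<in> LL a d R p" and ne: "p \<noteq> q"
  have sub: "LL a d R q \<subseteq> LL a d R p" using qL unfolding LL_def by auto
  have "p \<notin> LL a d R q"
  proof
    assume "p \<in> LL a d R q"
    then have "kk a p = kk a q \<and> fst p = fst q" using qL unfolding LL_def by auto
    then show False using kk_inj[OF p q] ne by auto
  qed
  moreover have "p \<in> LL a d R p" using p unfolding LL_def by auto
  ultimately show ?thesis using sub by blast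
qed

lemma gg_inj: "inj_on (gg a d R) (DD a d R)"
proof (rule inj_onI, rule ccontr)
  fix p q assume p: "p \<in> DD a d R" and q: "q \<in> DD a d R" and eq: "gg a d R p = gg a d R q" and ne: "p \<noteq> q"
  have "q \<in> LL a d R p \<or> p \<in> LL a d R q" using p q unfolding LL_def by auto
  then show False
  proof
    assume "q \<in> LL a d R p"
    from LL_sub[OF p q this ne] have "gg a d R q < gg a d R p" unfolding gg_def
      by (meson LL_fin psubset_card_mono)
    then show False using eq by simp
  next
    assume "p \<in> LL a d R q"
    from LL_sub[OF q p this] ne have "LL a d R p \<subset> LL a d R q" by auto
    then have "gg a d R p < gg a d R q" unfolding gg_def
      by (meson LL_fin psubset_card_mono)
    then show False using eq by simp
  qed
qed

lemma gg_pos: "p \<in> DD a d R \<Longrightarrow> gg a d R p \<ge> 1"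
proof -
  assume p: "p \<in> DD a d R"
  then have "p \<in> LL a d R p" unfolding LL_def by auto
  then show ?thesis unfolding gg_def using LL_fin
    by (metis One_nat_def Suc_leI card_gt_0_iff empty_iff)
qed

lemma card_le_real: "y \<ge> 0 \<Longrightarrow> real (card {r \<in> {1..R::nat}. real r \<le> y}) \<le> y"
proof -
  assume y: "y \<ge> 0"
  have "{r \<in> {1..R::nat}. real r \<le> y} \<subseteq> {1..nat \<lfloor>y\<rfloor>}"
    using y by (auto simp: le_nat_floor)
  then have "card {r \<in> {1..R::nat}. real r \<le> y} \<le> nat \<lfloor>y\<rfloor>"
    by (metis card_atLeastAtMost card_mono diff_Suc_1 finite_atLeastAtMost)
  then have "real (card {r \<in> {1..R::nat}. real r \<le> y}) \<le> real (nat \<lfloor>y\<rfloor>)" by linarith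
  also have "\<dots> \<le> y" using y by linarith
  finally show ?thesis .
qed

lemma gg_bound:
  assumes nn: "\<And>j. a j \<ge> 0" and s1: "(\<Sum>j=1..d. a j) = 1" and p: "p \<in> DD a d R"
  shows "real (gg a d R p) \<le> kk a p"
proof -
  define x where "x = kk a p"
  have x0: "x \<ge> 0" using nn unfolding x_def kk_def by simp
  have "LL a d R p \<subseteq> Sigma {1..d} (\<lambda>j. {r \<in> {1..R}. real r \<le> a j * x})"
  proof
    fix q assume "q \<in> LL a d R p"
    then have q: "q \<in> DD a d R" and le: "kk a q \<le> x" unfolding LL_def x_def by auto
    then have "a (fst q) > 0" unfolding DD_def by auto
    then have "real (snd q) \<le> a (fst q) * x" using le unfolding kk_def by (simp add: field_simps)
    then show "q \<in> Sigma {1..d} (\<lambda>j. {r \<in> {1..R}. real r \<le> a j * x})"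
      using q unfolding DD_def by (cases q) auto
  qed
  then have "gg a d R p \<le> card (Sigma {1..d} (\<lambda>j. {r \<in> {1..R}. real r \<le> a j * x}))"
    unfolding gg_def by (intro card_mono) auto
  also have "\<dots> = (\<Sum>j=1..d. card {r \<in> {1..R}. real r \<le> a j * x})"
    by (rule card_SigmaI) auto
  finally have c1: "gg a d R p \<le> (\<Sum>j=1..d. card {r \<in> {1..R}. real r \<le> a j * x})" .
  have "real (gg a d R p) \<le> real (\<Sum>j=1..d. card {r \<in> {1..R}. real r \<le> a j * x})"
    using c1 by (simp only: of_nat_le_iff)
  also have "\<dots> = (\<Sum>j=1..d. real (card {r \<in> {1..R}. real r \<le> a j * x}))"
    by (rule of_nat_sum)
  also have "\<dots> \<le> (\<Sum>j=1..d. a j * x)"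
    by (intro sum_mono card_le_real) (use nn x0 in auto)
  also have "\<dots> = (\<Sum>j=1..d. a j) * x" by (simp add: sum_distrib_right)
  also have "\<dots> = x" using s1 by simp
  finally show ?thesis unfolding x_def .
qed



lemma extend_bij:
  assumes A: "finite A" and S: "S \<subseteq> A" and inj: "inj_on h S" and img: "h ` S \<subseteq> A"
  shows "\<exists>f. bij_betw f A A \<and> (\<forall>p\<in>S. f p = h p)"
proof -
  have fS: "finite S" using A S finite_subset by blast
  have "card (A - S) = card (A - h ` S)"
    using card_Diff_subset[OF fS S] card_Diff_subset[OF finite_imageI[OF fS] img] card_image[OF inj]
    by simp
  then obtain e where e: "bij_betw e (A - S) (A - h ` S)"
    using finite_same_card_bij A by (meson finite_Diff)
  define f where "f p = (if p \<in> S then h p else e p)" for p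
  have b1: "bij_betw f S (h ` S)"
    using inj_on_imp_bij_betw[OF inj] by (rule bij_betw_cong[THEN iffD1, rotated]) (simp add: f_def)
  have b2: "bij_betw f (A - S) (A - h ` S)"
    using e by (rule bij_betw_cong[THEN iffD1, rotated]) (simp add: f_def)
  have "bij_betw f (S \<union> (A - S)) (h ` S \<union> (A - h ` S))"
    by (rule bij_betw_combine[OF b1 b2]) auto
  moreover have "S \<union> (A - S) = A" "h ` S \<union> (A - h ` S) = A" using S img by auto
  ultimately show ?thesis unfolding f_def by auto
qed

definition sh :: "nat \<Rightarrow> nat \<Rightarrow> nat \<Rightarrow> nat" where
  "sh T s t = (if t + s \<le> T then t + s else t + s - T)"

lemma sh_into: "s \<le> T \<Longrightarrow> t \<in> {1..T} \<Longrightarrow> sh T s t \<in> {1..T}"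
  unfolding sh_def by auto

lemma sh_inj: "s \<le> T \<Longrightarrow> inj_on (sh T s) {1..T}"
  unfolding sh_def inj_on_def by auto

definition om :: "nat \<Rightarrow> complex" where
  "om T = exp (2 * complex_of_real pi * \<i> / of_nat T)"

lemma vartheta_om: "t \<in> {1..T} \<Longrightarrow> vartheta T t = complex_of_real (1 / sqrt (real T)) * om T ^ t"
  unfolding vartheta_def om_def by simp

lemma om_pow_T: "T \<ge> 1 \<Longrightarrow> om T ^ T = 1"
proof -
  assume T: "T \<ge> 1"
  have "om T ^ T = exp (of_nat T * (2 * complex_of_real pi * \<i> / of_nat T))"
    unfolding om_def by (rule exp_of_nat_mult[symmetric])
  also have "\<dots> = exp (2 * complex_of_real pi * \<i>)" using T by simp
  also have "\<dots> = 1" by simp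
  finally show ?thesis .
qed

lemma om_norm: "cmod (om T) = 1"
  unfolding om_def by (simp add: norm_exp_eq_Re)

lemma om_sh: "T \<ge> 1 \<Longrightarrow> s \<le> T \<Longrightarrow> t \<in> {1..T} \<Longrightarrow> om T ^ sh T s t = om T ^ (t + s)"
proof -
  assume T: "T \<ge> 1" and s: "s \<le> T" and t: "t \<in> {1..T}"
  show ?thesis
  proof (cases "t + s \<le> T")
    case True then show ?thesis unfolding sh_def by simp
  next
    case False
    then have "t + s = (t + s - T) + T" by simp
    then have "om T ^ (t + s) = om T ^ (t + s - T) * om T ^ T" by (metis power_add)
    then show ?thesis using False om_pow_T[OF T] unfolding sh_def by simp
  qed
qed

lemma cnj_unit: "cmod z = 1 \<Longrightarrow> cnj z * z = 1"
  by (metis complex_norm_square mult.commute power_one of_real_1)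

lemma cnj_om_mult: "cnj (om T) ^ n * om T ^ n = 1"
proof -
  have "cnj (om T) ^ n * om T ^ n = (cnj (om T) * om T) ^ n" by (simp add: power_mult_distrib)
  then show ?thesis using cnj_unit[OF om_norm] by simp
qed

lemma vartheta_sh:
  assumes T: "T \<ge> 1" and s: "s \<le> T" and t: "t \<in> {1..T}"
  shows "cnj (vartheta T (sh T s t)) * vartheta T t = cnj (om T) ^ s / of_nat T"
proof -
  have "cnj (vartheta T (sh T s t)) * vartheta T t =
     complex_of_real (1 / sqrt (real T)) * complex_of_real (1 / sqrt (real T)) * (cnj (om T ^ (t + s)) * om T ^ t)"
    using vartheta_om[OF sh_into[OF s t]] vartheta_om[OF t] om_sh[OF T s t] by simp
  also have "cnj (om T ^ (t + s)) * om T ^ t = cnj (om T) ^ s * (cnj (om T) ^ t * om T ^ t)"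
    by (simp add: power_add)
  also have "\<dots> = cnj (om T) ^ s" by (simp add: cnj_om_mult)
  also have "complex_of_real (1 / sqrt (real T)) * complex_of_real (1 / sqrt (real T)) = 1 / of_nat T"
    using T by (simp flip: of_real_mult) 
  finally show ?thesis by simp
qed



lemma om_cis: "om T = cis (2 * pi / real T)"
  unfolding om_def cis_conv_exp by (simp add: mult.commute mult.left_commute)

lemma re_formula: "Re (cnj (om T) ^ s * c) = cmod c * cos (Arg c - 2 * pi * real s / real T)"
proof -
  have "cnj (om T) ^ s = cis (real s * (- (2 * pi / real T)))"
    unfolding om_cis cis_cnj Complex.DeMoivre ..
  moreover have "c = complex_of_real (cmod c) * cis (Arg c)"
    using rcis_cmod_Arg[of c] unfolding rcis_def by simp
  ultimately have "cnj (om T) ^ s * c = cis (real s * (- (2 * pi / real T))) * (complex_of_real (cmod c) * cis (Arg c))"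
    by simp
  also have "\<dots> = complex_of_real (cmod c) * (cis (real s * (- (2 * pi / real T))) * cis (Arg c))"
    by (simp only: mult.left_commute)
  also have "\<dots> = complex_of_real (cmod c) * cis (real s * (- (2 * pi / real T)) + Arg c)"
    by (simp only: cis_mult)
  also have "real s * (- (2 * pi / real T)) + Arg c = Arg c - 2 * pi * real s / real T"
    by (simp add: field_simps)
  finally show ?thesis by simp
qed

lemma phase:
  assumes T: "T \<ge> 1"
  shows "\<exists>s\<le>T. Re (cnj (om T) ^ s * c) \<ge> cmod c * cos (pi / real T)"
proof -
  define th where "th = (if Arg c < 0 then Arg c + 2 * pi else Arg c)"
  have th0: "0 \<le> th" and th1: "th < 2 * pi"
    using mpi_less_Arg[of c] Arg_le_pi[of c] pi_gt3 unfolding th_def by auto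
  have costh: "cos (Arg c - y) = cos (th - y)" for y
  proof (cases "Arg c < 0")
    case True
    have "cos (th - y) = cos ((Arg c - y) + 2 * pi)" unfolding th_def using True by (simp add: algebra_simps)
    then show ?thesis by simp
  qed (simp add: th_def)
  define y where "y = th * real T / (2 * pi)"
  have y0: "0 \<le> y" and y1: "y < real T" using th0 th1 T unfolding y_def by (auto simp: field_simps)
  define s where "s = nat \<lfloor>y + 1/2\<rfloor>"
  have sint: "real s = of_int \<lfloor>y + 1/2\<rfloor>" using y0 unfolding s_def by simp
  have sy: "\<bar>y - real s\<bar> \<le> 1/2" unfolding sint by linarith
  have sT: "s \<le> T"
  proof -
    have "real s \<le> y + 1/2" using sint by linarith
    then have "real s < real T + 1" using y1 by linarith
    then show ?thesis by linarith
  qed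
  have Tpos: "real T > 0" using T by simp
  have "th - 2 * pi * real s / real T = (2 * pi / real T) * (y - real s)"
    unfolding y_def using Tpos by (simp add: field_simps)
  then have "\<bar>th - 2 * pi * real s / real T\<bar> = (2 * pi / real T) * \<bar>y - real s\<bar>"
    by (simp add: abs_mult)
  also have "\<dots> \<le> (2 * pi / real T) * (1/2)"
    using sy Tpos by (intro mult_left_mono) auto
  finally have ab: "\<bar>th - 2 * pi * real s / real T\<bar> \<le> pi / real T" by simp
  have "pi / real T \<le> pi" using T by (simp add: field_simps)
  then have "cos (pi / real T) \<le> cos \<bar>th - 2 * pi * real s / real T\<bar>"
    using ab by (intro cos_monotone_0_pi_le) auto
  then have "cmod c * cos (pi / real T) \<le> cmod c * cos (Arg c - 2 * pi * real s / real T)"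
    unfolding costh cos_abs_real by (intro mult_left_mono) auto
  then show ?thesis using sT re_formula by metis
qed



lemma harm_upper: "n \<ge> 1 \<Longrightarrow> harm n \<le> 1 + ln (real n)"
proof -
  assume n: "n \<ge> 1"
  then obtain m where m: "n = Suc m" by (cases n) auto
  have "harm (Suc m) - ln (real (Suc m)) \<le> harm (Suc 0) - ln (real (Suc 0))"
    using decseq_harm_diff_ln unfolding decseq_def by (metis le0)
  then show ?thesis using m by (simp add: harm_def)
qed

lemma chi_harm: "chi R = harm R"
  by (simp add: chi_def harm_def divide_inverse)

definition SS :: "(nat \<Rightarrow> real) \<Rightarrow> nat \<Rightarrow> nat \<Rightarrow> (nat \<times> nat) set" where
  "SS a d R = Sigma {j\<in>{1..d}. a j > 0} (\<lambda>j. {r\<in>{1..R}. real r \<le> a j * real R})"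

lemma inner_set: "0 \<le> x \<Longrightarrow> x \<le> 1 \<Longrightarrow> {r\<in>{1..R}. real r \<le> x * real R} = {1..nat \<lfloor>x * real R\<rfloor>}"
proof -
  assume x: "0 \<le> x" "x \<le> 1"
  have "x * real R \<le> real R" using x by (simp add: mult_left_le_one_le)
  then have a: "nat \<lfloor>x * real R\<rfloor> \<le> R" by linarith
  have b: "real (nat \<lfloor>x * real R\<rfloor>) \<le> x * real R" using x by (intro of_nat_floor) simp
  show ?thesis
  proof (intro set_eqI iffI)
    fix r assume "r \<in> {r\<in>{1..R}. real r \<le> x * real R}"
    then show "r \<in> {1..nat \<lfloor>x * real R\<rfloor>}" by (auto simp: le_nat_floor)
  next
    fix r assume r: "r \<in> {1..nat \<lfloor>x * real R\<rfloor>}"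
    then have "real r \<le> real (nat \<lfloor>x * real R\<rfloor>)" by simp
    then show "r \<in> {r\<in>{1..R}. real r \<le> x * real R}" using r a b by auto
  qed
qed

lemma aln: "0 < x \<Longrightarrow> R \<ge> 1 \<Longrightarrow> x * harm (nat \<lfloor>x * real R\<rfloor>) \<ge> x * ln (real R) - 1"
proof -
  assume x: "0 < x" and R: "R \<ge> 1"
  have xR: "x * real R > 0" using x R by simp
  have le: "x * real R \<le> real (nat \<lfloor>x * real R\<rfloor>) + 1" using xR by linarith
  have "ln (x * real R) \<le> ln (real (nat \<lfloor>x * real R\<rfloor>) + 1)"
    using ln_le_cancel_iff[OF xR add_nonneg_pos[OF of_nat_0_le_iff zero_less_one]] le by blast
  also have "\<dots> \<le> harm (nat \<lfloor>x * real R\<rfloor>)" by (rule ln_le_harm)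
  finally have h: "ln x + ln (real R) \<le> harm (nat \<lfloor>x * real R\<rfloor>)" using x R by (simp add: ln_mult)
  have "ln (1 / x) \<le> 1 / x - 1" using x by (intro ln_le_minus_one) simp
  then have "- ln x \<le> 1/x - 1" using x by (simp add: ln_div)
  then have "x * (- ln x) \<le> x * (1/x - 1)" using x by (intro mult_left_mono) auto
  moreover have "x * (1/x - 1) = 1 - x" using x by (simp add: field_simps)
  ultimately have "x * ln x \<ge> x - 1" by linarith
  then have "x * ln (real R) - 1 \<le> x * (ln x + ln (real R))" using x by (simp add: algebra_simps)
  also have "\<dots> \<le> x * harm (nat \<lfloor>x * real R\<rfloor>)" using h x by (intro mult_left_mono) auto
  finally show ?thesis .
qed

lemma magn:
  assumes nn: "\<And>j. a j \<ge> 0" and s1: "(\<Sum>j=1..d. a j) = 1" and R: "R \<ge> 1" and lR: "ln (real R) \<ge> real d"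
  shows "(\<Sum>p\<in>SS a d R. a (fst p) / (real (snd p) * chi R)) \<ge> (ln (real R) - real d) / (1 + ln (real R))"
proof -
  define J where "J = {j\<in>{1..d}. a j > 0}"
  have a1: "a j \<le> 1" if "j \<in> {1..d}" for j
    using member_le_sum[of j "{1..d}" a] nn that s1 by auto
  have chipos: "chi R > 0" using R unfolding chi_harm by simp
  have chiup: "chi R \<le> 1 + ln (real R)" using harm_upper[OF R] unfolding chi_harm .
  have sJ: "(\<Sum>j\<in>J. a j) = 1"
  proof -
    have "(\<Sum>j=1..d. a j) = (\<Sum>j\<in>J. a j)" unfolding J_def
      apply (rule sum.mono_neutral_right)
        apply (auto simp: J_def)
      by (meson nn not_le order_antisym)
    then show ?thesis using s1 by simp
  qed
  have "card J \<le> card {1..d}" by (rule card_mono) (auto simp: J_def)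
  then have cJ: "real (card J) \<le> real d" by simp
  have "(\<Sum>p\<in>SS a d R. a (fst p) / (real (snd p) * chi R))
      = (\<Sum>j\<in>J. \<Sum>r\<in>{r\<in>{1..R}. real r \<le> a j * real R}. a j / (real r * chi R))"
    unfolding SS_def J_def by (subst sum.Sigma) (auto simp: split_def)
  also have "\<dots> = (\<Sum>j\<in>J. (a j * harm (nat \<lfloor>a j * real R\<rfloor>)) / chi R)"
  proof (rule sum.cong[OF refl])
    fix j assume j: "j \<in> J"
    then have "{r\<in>{1..R}. real r \<le> a j * real R} = {1..nat \<lfloor>a j * real R\<rfloor>}"
      using a1 nn unfolding J_def by (intro inner_set) auto
    then show "(\<Sum>r\<in>{r\<in>{1..R}. real r \<le> a j * real R}. a j / (real r * chi R)) = (a j * harm (nat \<lfloor>a j * real R\<rfloor>)) / chi R"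
      by (simp add: harm_def sum_distrib_left sum_distrib_right divide_inverse mult_ac)
  qed
  also have "\<dots> = (\<Sum>j\<in>J. a j * harm (nat \<lfloor>a j * real R\<rfloor>)) / chi R"
    by (simp add: sum_divide_distrib)
  finally have eq: "(\<Sum>p\<in>SS a d R. a (fst p) / (real (snd p) * chi R)) = (\<Sum>j\<in>J. a j * harm (nat \<lfloor>a j * real R\<rfloor>)) / chi R" .
  have "(\<Sum>j\<in>J. a j * harm (nat \<lfloor>a j * real R\<rfloor>)) \<ge> (\<Sum>j\<in>J. a j * ln (real R) - 1)"
    by (intro sum_mono aln) (use R in \<open>auto simp: J_def\<close>)
  also have "(\<Sum>j\<in>J. a j * ln (real R) - 1) = (\<Sum>j\<in>J. a j * ln (real R)) - (\<Sum>j\<in>J. 1)"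
    by (rule sum_subtractf)
  also have "(\<Sum>j\<in>J. a j * ln (real R)) = ln (real R)"
    using sum_distrib_right[of a J "ln (real R)"] sJ by simp
  finally have num: "(\<Sum>j\<in>J. a j * harm (nat \<lfloor>a j * real R\<rfloor>)) \<ge> ln (real R) - real d" using cJ by simp
  have "(ln (real R) - real d) / (1 + ln (real R)) \<le> (ln (real R) - real d) / chi R"
    using chipos chiup lR by (intro divide_left_mono) auto
  also have "\<dots> \<le> (\<Sum>j\<in>J. a j * harm (nat \<lfloor>a j * real R\<rfloor>)) / chi R"
    using num chipos by (intro divide_right_mono) auto
  finally show ?thesis unfolding eq .
qed




definition mr :: "nat \<Rightarrow> nat \<Rightarrow> real" where
  "mr R r = (if r \<in> {1..R} then 1 / sqrt (chi R) * (1 / sqrt (real r)) else 0)"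

lemma mu_mr: "mu R r = complex_of_real (mr R r)"
  unfolding mu_def mr_def by simp

lemma mr_nonneg: "R \<ge> 1 \<Longrightarrow> mr R r \<ge> 0"
  unfolding mr_def chi_harm by (auto intro!: mult_nonneg_nonneg harm_nonneg)

lemma term_bound:
  assumes a: "a > 0" and g1: "1 \<le> g" and g: "g \<le> r / a" and r: "r \<ge> 1" and ch: "ch > 0"
  shows "a / (r * ch) \<le> sqrt a * ((1 / sqrt ch * (1 / sqrt g)) * (1 / sqrt ch * (1 / sqrt r)))"
proof -
  have "g * r \<le> (r / a) * r" using g r by (intro mult_right_mono) auto
  then have "sqrt (g * r) \<le> sqrt ((r / a) * r)" by (rule real_sqrt_le_mono)
  also have "(r / a) * r = (r * r) / a" by simp
  also have "sqrt ((r * r) / a) = sqrt (r * r) / sqrt a" by (rule real_sqrt_divide)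
  also have "sqrt (r * r) = r" using r by simp
  finally have sq: "sqrt (g * r) \<le> r / sqrt a" .
  have pos: "sqrt (g * r) > 0" using g1 r by simp
  have "sqrt a * ((1 / sqrt ch * (1 / sqrt g)) * (1 / sqrt ch * (1 / sqrt r))) = sqrt a / (ch * sqrt (g * r))"
    using ch by (simp add: real_sqrt_mult field_simps)
  also have "\<dots> \<ge> sqrt a / (ch * (r / sqrt a))"
    using sq pos ch a r by (intro divide_left_mono mult_left_mono mult_pos_pos divide_pos_pos) auto
  also have "sqrt a / (ch * (r / sqrt a)) = a / (r * ch)"
    using a by (simp add: field_simps)
  finally show ?thesis .
qed



lemma amp_term:
  assumes T: "T \<ge> 1" and s: "s \<le> T" and t: "t \<in> {1..T}"
  shows "cnj (out_state T R (sh T s t, q)) * in_state T R c (t, j, r)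
       = (cnj (om T) ^ s / of_nat T) * c j * complex_of_real ((if fst q = 1 then mr R (snd q) else 0) * mr R r)"
proof -
  have "cnj (out_state T R (sh T s t, q)) * in_state T R c (t, j, r)
      = (cnj (vartheta T (sh T s t)) * vartheta T t) * c j * complex_of_real ((if fst q = 1 then mr R (snd q) else 0) * mr R r)"
    by (cases q) (simp add: out_state_def in_state_def mu_mr mult_ac)
  then show ?thesis using vartheta_sh[OF T s t] by simp
qed

lemma main_bound:
  assumes d: "d \<ge> 1" and R: "R \<ge> 1" and T: "T \<ge> 1" and lR: "ln (real R) \<ge> real d"
    and cpos: "cos (pi / real T) \<ge> 0"
    and nc: "(\<Sum>j=1..d. (cmod (c j))\<^sup>2) = 1"
  shows "\<exists>\<pi>. \<pi> permutes index_set T d R \<and>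
     Re (perm_amp (index_set T d R) \<pi> (out_state T R) (in_state T R c))
       \<ge> cos (pi / real T) * ((ln (real R) - real d) / (1 + ln (real R)))"
proof -
  define a where "a j = (cmod (c j))\<^sup>2" for j
  have nn: "\<And>j. a j \<ge> 0" unfolding a_def by simp
  have s1: "(\<Sum>j=1..d. a j) = 1" using nc unfolding a_def .
  define A where "A = {1..d} \<times> {1..R}"
  have finA: "finite A" unfolding A_def by simp
  define S where "S = SS a d R"
  have SD: "S \<subseteq> DD a d R" unfolding S_def SS_def DD_def by auto
  have SA: "S \<subseteq> A" unfolding S_def SS_def A_def by auto
  define h where "h p = (1::nat, gg a d R p)" for p
  have hinj: "inj_on h S" using inj_on_subset[OF gg_inj SD] unfolding h_def inj_on_def by auto
  have gS: "gg a d R p \<ge> 1 \<and> gg a d R p \<le> R \<and> real (gg a d R p) \<le> real (snd p) / a (fst p)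
             \<and> a (fst p) > 0 \<and> snd p \<in> {1..R} \<and> fst p \<in> {1..d}" if p: "p \<in> S" for p
  proof -
    have pD: "p \<in> DD a d R" using p SD by auto
    have ap: "a (fst p) > 0" and rp: "real (snd p) \<le> a (fst p) * real R" and rr: "snd p \<in> {1..R}"
      and jj: "fst p \<in> {1..d}"
      using p unfolding S_def SS_def by auto
    have g: "real (gg a d R p) \<le> real (snd p) / a (fst p)"
      using gg_bound[OF nn s1 pD] unfolding kk_def .
    have "real (snd p) / a (fst p) \<le> real R" using ap rp by (simp add: pos_divide_le_eq mult.commute)
    then have "gg a d R p \<le> R" using g by linarith
    then show ?thesis using gg_pos[OF pD] g ap rr jj by auto
  qed
  have himg: "h ` S \<subseteq> A" using gS d unfolding h_def A_def by auto
  obtain f where fb: "bij_betw f A A" and fS: "\<And>p. p \<in> S \<Longrightarrow> f p = h p"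
    using extend_bij[OF finA SA hinj himg] by blast
  have "\<forall>j. \<exists>s\<le>T. Re (cnj (om T) ^ s * c j) \<ge> cmod (c j) * cos (pi / real T)"
    using phase[OF T] by blast
  then obtain s where s: "\<And>j. s j \<le> T"
    and sph: "\<And>j. Re (cnj (om T) ^ s j * c j) \<ge> cmod (c j) * cos (pi / real T)" by metis
  define I where "I = index_set T d R"
  have I: "I = {1..T} \<times> A" unfolding I_def index_set_def A_def by auto
  have finI: "finite I" unfolding I using finA by simp
  define \<pi> where "\<pi> x = (if x \<in> I then (sh T (s (fst (snd x))) (fst x), f (snd x)) else x)" for x
  have inI: "\<pi> ` I \<subseteq> I"
  proof
    fix y assume "y \<in> \<pi> ` I"
    then obtain x where x: "x \<in> I" and y: "y = \<pi> x" by auto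
    have xs: "fst x \<in> {1..T}" "snd x \<in> A" using x I by auto
    have "\<pi> x = (sh T (s (fst (snd x))) (fst x), f (snd x))" using x by (simp add: \<pi>_def)
    moreover have "sh T (s (fst (snd x))) (fst x) \<in> {1..T}" using sh_into[OF s xs(1)] .
    moreover have "f (snd x) \<in> A" using bij_betwE[OF fb] xs(2) by auto
    ultimately show "y \<in> I" unfolding y I by auto
  qed
  have injI: "inj_on \<pi> I"
  proof (rule inj_onI)
    fix x y assume x: "x \<in> I" and y: "y \<in> I" and eq: "\<pi> x = \<pi> y"
    have xs: "fst x \<in> {1..T}" "snd x \<in> A" using x I by auto
    have ys: "fst y \<in> {1..T}" "snd y \<in> A" using y I by auto
    from eq x y have e1: "f (snd x) = f (snd y)" and
      e2: "sh T (s (fst (snd x))) (fst x) = sh T (s (fst (snd y))) (fst y)"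
      unfolding \<pi>_def by auto
    have "snd x = snd y" using e1 bij_betw_imp_inj_on[OF fb] xs ys by (auto dest: inj_onD)
    moreover then have "sh T (s (fst (snd y))) (fst x) = sh T (s (fst (snd y))) (fst y)" using e2 by simp
    then have "fst x = fst y" using inj_onD[OF sh_inj[OF s[of "fst (snd y)"]] _ xs(1) ys(1)] by blast
    ultimately show "x = y" by (simp add: prod_eq_iff)
  qed
  have perm: "\<pi> permutes I"
  proof (rule bij_imp_permutes)
    show "bij_betw \<pi> I I" using endo_inj_surj[OF finI inI injI] injI by (simp add: bij_betw_def)
    show "\<And>x. x \<notin> I \<Longrightarrow> \<pi> x = x" unfolding \<pi>_def by simp
  qed
  define w where "w p = (if fst (f p) = 1 then mr R (snd (f p)) else 0) * mr R (snd p)" for p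
  have w0: "w p \<ge> 0" for p unfolding w_def using mr_nonneg[OF R] by auto
  define G where "G p = Re (cnj (om T) ^ s (fst p) * c (fst p)) * w p" for p
  have tm: "Re (cnj (out_state T R (\<pi> x)) * in_state T R c x) = G (snd x) / real T" if x: "x \<in> I" for x
  proof -
    obtain t j r where xe: "x = (t, j, r)" by (cases x) auto
    have t: "t \<in> {1..T}" using x xe I by auto
    have px: "\<pi> (t, j, r) = (sh T (s j) t, f (j, r))" using x xe by (simp add: \<pi>_def)
    have "cnj (out_state T R (\<pi> x)) * in_state T R c x
        = (cnj (om T) ^ s j / of_nat T) * c j * complex_of_real (w (j, r))"
      unfolding xe px w_def snd_conv by (rule amp_term[OF T s t])
    then show ?thesis unfolding G_def xe by simp
  qed
  have "Re (perm_amp I \<pi> (out_state T R) (in_state T R c)) = (\<Sum>x\<in>I. G (snd x) / real T)"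
    unfolding perm_amp_def Re_sum using tm by (intro sum.cong) auto
  also have "\<dots> = (\<Sum>(t,p)\<in>{1..T} \<times> A. G p / real T)"
    unfolding I by (simp add: split_def)
  also have "\<dots> = (\<Sum>t\<in>{1..T}. \<Sum>p\<in>A. G p / real T)"
    by (rule sum.cartesian_product[symmetric])
  also have "\<dots> = real T * (\<Sum>p\<in>A. G p / real T)" by simp
  also have "\<dots> = (\<Sum>p\<in>A. G p)" using T by (simp add: sum_divide_distrib[symmetric])
  finally have amp: "Re (perm_amp I \<pi> (out_state T R) (in_state T R c)) = (\<Sum>p\<in>A. G p)" .
  have "(\<Sum>p\<in>A. G p) \<ge> (\<Sum>p\<in>A. cos (pi / real T) * (cmod (c (fst p)) * w p))"
  proof (intro sum_mono)
    fix p
    have e: "cos (pi / real T) * (cmod (c (fst p)) * w p) = cmod (c (fst p)) * cos (pi / real T) * w p"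
      by (simp only: mult_ac)
    show "cos (pi / real T) * (cmod (c (fst p)) * w p) \<le> G p"
      unfolding G_def using e mult_right_mono[OF sph[of "fst p"] w0[of p]] by linarith
  qed
  moreover have "(\<Sum>p\<in>A. cos (pi / real T) * (cmod (c (fst p)) * w p)) = cos (pi / real T) * (\<Sum>p\<in>A. cmod (c (fst p)) * w p)"
    by (simp add: sum_distrib_left)
  moreover have "(\<Sum>p\<in>A. cmod (c (fst p)) * w p) \<ge> (\<Sum>p\<in>S. cmod (c (fst p)) * w p)"
    using SA finA w0 by (intro sum_mono2) auto
  moreover have "(\<Sum>p\<in>S. cmod (c (fst p)) * w p) \<ge> (\<Sum>p\<in>S. a (fst p) / (real (snd p) * chi R))"
  proof (intro sum_mono)
    fix p assume p: "p \<in> S"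
    note g = gS[OF p]
    have fp: "f p = (1, gg a d R p)" using fS[OF p] unfolding h_def .
    have cm: "cmod (c (fst p)) = sqrt (a (fst p))" unfolding a_def by simp
    have wp: "w p = (1 / sqrt (chi R) * (1 / sqrt (real (gg a d R p)))) * (1 / sqrt (chi R) * (1 / sqrt (real (snd p))))"
      unfolding w_def fp mr_def using g by auto
    have chp: "chi R > 0" using R unfolding chi_harm by simp
    show "a (fst p) / (real (snd p) * chi R) \<le> cmod (c (fst p)) * w p"
      unfolding cm wp using g chp by (intro term_bound) auto
  qed
  moreover have "(\<Sum>p\<in>S. a (fst p) / (real (snd p) * chi R)) \<ge> (ln (real R) - real d) / (1 + ln (real R))"
    unfolding S_def by (rule magn[OF nn s1 R lR])
  ultimately have "Re (perm_amp I \<pi> (out_state T R) (in_state T R c)) \<ge> cos (pi / real T) * ((ln (real R) - real d) / (1 + ln (real R)))"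
    unfolding amp using cpos by (smt (verit) mult_left_mono)
  then show ?thesis using perm unfolding I_def by blast
qed



theorem lemma3:
  fixes \<epsilon> :: real and d :: nat
  assumes "\<epsilon> > 0" and "d \<ge> 1"
  shows "\<exists>R0 T0 :: nat. \<forall>R T :: nat. R \<ge> R0 \<longrightarrow> T \<ge> T0 \<longrightarrow>
           (\<forall>c :: nat \<Rightarrow> complex. (\<Sum>j=1..d. (cmod (c j))\<^sup>2) = 1 \<longrightarrow>
             (\<exists>\<pi>. \<pi> permutes index_set T d R \<and>
                Re (perm_amp (index_set T d R) \<pi> (out_state T R) (in_state T R c)) \<ge> 1 - \<epsilon>))"
proof -
  define e where "e = min \<epsilon> 1"
  have e0: "e > 0" and e1: "e \<le> 1" and ee: "e \<le> \<epsilon>" using assms(1) unfolding e_def by auto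
  obtain T1 where T1: "\<And>T. T \<ge> T1 \<Longrightarrow> cos (pi / real T) \<ge> 1 - e/2"
    using ev_T[of "e/2"] e0 by auto
  obtain R1 where R1: "\<And>R. R \<ge> R1 \<Longrightarrow> (ln (real R) - real d)/(1 + ln (real R)) \<ge> 1 - e/2 \<and> ln (real R) \<ge> real d"
    using ev_R[of "e/2" d] e0 by auto
  have key: "\<exists>\<pi>. \<pi> permutes index_set T d R \<and>
                Re (perm_amp (index_set T d R) \<pi> (out_state T R) (in_state T R c)) \<ge> 1 - \<epsilon>"
    if R: "max R1 1 \<le> R" and T: "max T1 1 \<le> T" and nc: "(\<Sum>j=1..d. (cmod (c j))\<^sup>2) = 1"
    for R T :: nat and c :: "nat \<Rightarrow> complex"
  proof -
    have c1: "cos (pi / real T) \<ge> 1 - e/2" using T T1 by auto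
    have r1: "(ln (real R) - real d)/(1 + ln (real R)) \<ge> 1 - e/2" and lR: "ln (real R) \<ge> real d"
      using R R1 by auto
    have Rg: "R \<ge> 1" using R by simp
    have Tg: "T \<ge> 1" using T by simp
    have cpos: "cos (pi / real T) \<ge> 0" using c1 e1 by linarith
    obtain \<pi> where p: "\<pi> permutes index_set T d R" and
      b: "Re (perm_amp (index_set T d R) \<pi> (out_state T R) (in_state T R c))
       \<ge> cos (pi / real T) * ((ln (real R) - real d) / (1 + ln (real R)))"
      using main_bound[OF assms(2) Rg Tg lR cpos nc] by blast
    have "(1 - e/2) * (1 - e/2) \<le> cos (pi / real T) * ((ln (real R) - real d) / (1 + ln (real R)))"
      using c1 r1 e1 by (intro mult_mono) auto
    moreover have "(1 - e/2) * (1 - e/2) = 1 - e + e * e / 4" by (simp add: algebra_simps)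
    moreover have "e * e \<ge> 0" by simp
    ultimately have "1 - \<epsilon> \<le> Re (perm_amp (index_set T d R) \<pi> (out_state T R) (in_state T R c))"
      using b ee by linarith
    then show "\<exists>\<pi>. \<pi> permutes index_set T d R \<and>
                Re (perm_amp (index_set T d R) \<pi> (out_state T R) (in_state T R c)) \<ge> 1 - \<epsilon>"
      using p by blast
  qed
  show ?thesis by (intro exI[of _ "max R1 1"] exI[of _ "max T1 1"] allI impI key)
qed


end
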